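(* Let $n\in\mathbb{N}$, let $c=(c_{i,j})$ be an $n\times(n+1)$ matrix with entries in $\{0,1\}$ such that every row and every column contains at least one entry equal to $1$, let $\sigma_1,\ldots,\sigma_n>0$, $\gamma_1,\ldots,\gamma_{n+1}>0$ with $\gamma^\ast=\gamma_1+\cdots+\gamma_{n+1}>1$. Let $\mathbf{X}=(X_1,\ldots,X_n)'$ have decumulative distribution function \[ \mathbf{P}[X_1>x_1,\ldots,X_n>x_n]=\prod_{j=1}^{n+1}\left(1+\sum_{i=1}^n\frac{c_{i,j}}{\sigma_i}x_i\right)^{-\gamma_j},\quad (x_1,\ldots,x_n)'\in(0,\infty)^n, \] and $X_-=\min_{1\le i\le n}X_i$. For $j=1,\ldots,n+1$ put $\alpha_j=\left(\sum_{i=1}^nc_{i,j}/\sigma_i\right)^{-1}$ and $\alpha_+(\boldsymbol{\sigma})=\max_{1\le j\le n+1}\alpha_j$. Let $K$ be a nonnegative integer-valued random variable with $p_k=\mathbf{P}[K=k]=c_+\delta_k$, $k=0,1,\ldots$, where $c_+=\prod_{j=1}^{n+1}(\alpha_j/\alpha_+(\boldsymbol{\sigma}))^{\gamma_j}$, $\delta_0=1$ and $\delta_k=k^{-1}\sum_{l=1}^k\sum_{j=1}^{n+1}\gamma_j(1-\alpha_j/\alpha_+(\boldsymbol{\sigma}))^l\delta_{k-l}$ for $k>0$. Then $X_-\sim Pa(II)(\alpha_+(\boldsymbol{\sigma}),\gamma^\ast+K)$, i.e. \[ \mathbf{P}[X_->x]=\sum_{k=0}^\infty p_k\left(1+\frac{x}{\alpha_+(\boldsymbol{\sigma})}\right)^{-(\gamma^\ast+k)},\quad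 x>0. \]
   Context: $Pa(II)(\sigma,\alpha)$ is the Pareto distribution of the 2nd kind with decumulative distribution function $(1+x/\sigma)^{-\alpha}$, $x>0$; with a random tail index $\gamma^\ast+K$ it denotes the corresponding mixture over the law of $K$. *)

theory Defs
  imports "HOL-Probability.Probability"
begin

text \<open>Indices are 0-based: rows i < n, columns j < n+1.\<close>

definition pa_alpha :: "nat \<Rightarrow> (nat \<Rightarrow> nat \<Rightarrow> real) \<Rightarrow> (nat \<Rightarrow> real) \<Rightarrow> nat \<Rightarrow> real" where
  "pa_alpha n c \<sigma> j = inverse (\<Sum>i<n. c i j / \<sigma> i)"

definition pa_alpha_plus :: "nat \<Rightarrow> (nat \<Rightarrow> nat \<Rightarrow> real) \<Rightarrow> (nat \<Rightarrow> real) \<Rightarrow> real" where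
  "pa_alpha_plus n c \<sigma> = Max (pa_alpha n c \<sigma> ` {..<n+1})"

definition pa_c_plus :: "nat \<Rightarrow> (nat \<Rightarrow> nat \<Rightarrow> real) \<Rightarrow> (nat \<Rightarrow> real) \<Rightarrow> (nat \<Rightarrow> real) \<Rightarrow> real" where
  "pa_c_plus n c \<sigma> \<gamma> =
     (\<Prod>j<n+1. (pa_alpha n c \<sigma> j / pa_alpha_plus n c \<sigma>) powr (\<gamma> j))"

function pa_delta :: "nat \<Rightarrow> (nat \<Rightarrow> nat \<Rightarrow> real) \<Rightarrow> (nat \<Rightarrow> real) \<Rightarrow> (nat \<Rightarrow> real) \<Rightarrow> nat \<Rightarrow> real" where
  "pa_delta n c \<sigma> \<gamma> k =
     (if k = 0 then 1
      else (\<Sum>l=1..k. (\<Sum>j<n+1. \<gamma> j * (1 - pa_alpha n c \<sigma> j / pa_alpha_plus n c \<sigma>) ^ l)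
                        * pa_delta n c \<sigma> \<gamma> (k - l)) / real k)"
  by auto
termination
  by (relation "Wellfounded.measure (\<lambda>(n, c, \<sigma>, \<gamma>, k). k)") auto

definition pa_p :: "nat \<Rightarrow> (nat \<Rightarrow> nat \<Rightarrow> real) \<Rightarrow> (nat \<Rightarrow> real) \<Rightarrow> (nat \<Rightarrow> real) \<Rightarrow> nat \<Rightarrow> real" where
  "pa_p n c \<sigma> \<gamma> k = pa_c_plus n c \<sigma> \<gamma> * pa_delta n c \<sigma> \<gamma> k"

declare pa_delta.simps[simp del]

end

theory Submission imports Defs begin
unbundle no vec_syntax
notation fps_nth (infixl "$" 75)

definition gfps :: "real \<Rightarrow> real \<Rightarrow> real fps" where
  "gfps g q = Abs_fps (\<lambda>k. pochhammer g k / fact k * q^k)"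
definition hfps :: "real \<Rightarrow> real fps" where
  "hfps q = Abs_fps (\<lambda>m. if m = 0 then 0 else q^m)"

lemma L1: "(1 - fps_const q * fps_X) * fps_deriv (gfps g q) = fps_const (g*q) * gfps g q"
proof (rule fps_ext)
  fix k
  have e: "(fps_const q * fps_X * f) $ k = (if k = 0 then 0 else q * f $ (k-1))" for f :: "real fps"
    by (simp add: mult.assoc)
  have "((1 - fps_const q * fps_X) * fps_deriv (gfps g q)) $ k
     = fps_deriv (gfps g q) $ k - (fps_const q * fps_X * fps_deriv (gfps g q)) $ k"
    by (simp add: algebra_simps)
  also have "\<dots> = real (k+1) * (pochhammer g (k+1) / fact (k+1) * q^(k+1)) - q * (real k * (pochhammer g k / fact k * q^k))"
    unfolding e by (cases k) (auto simp: gfps_def)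
  also have "\<dots> = g * q * (pochhammer g k / fact k * q^k)"
  proof -
    have "real (k+1) * (pochhammer g (k+1) / fact (k+1) * q^(k+1)) = (g + real k) * (pochhammer g k / fact k * q^(k+1))"
      by (simp add: pochhammer_rec' field_simps del: of_nat_Suc)
    thus ?thesis by (simp add: field_simps)
  qed
  finally show "((1 - fps_const q * fps_X) * fps_deriv (gfps g q)) $ k = (fps_const (g*q) * gfps g q) $ k"
    by (simp add: gfps_def)
qed

lemma L2: "(1 - fps_const q * fps_X) * hfps q = fps_const q * fps_X"
proof (rule fps_ext)
  fix k
  have e: "(fps_const q * fps_X * f) $ k = (if k = 0 then 0 else q * f $ (k-1))" for f :: "real fps"
    by (simp add: mult.assoc)
  have "((1 - fps_const q * fps_X) * hfps q) $ k = hfps q $ k - (fps_const q * fps_X * hfps q) $ k"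
    by (simp add: algebra_simps)
  also have "\<dots> = (fps_const q * fps_X) $ k"
    unfolding e by (cases k) (auto simp: hfps_def fps_X_def power_eq_if)
  finally show "((1 - fps_const q * fps_X) * hfps q) $ k = (fps_const q * fps_X) $ k" .
qed

lemma L3: "fps_X * fps_deriv (gfps g q) = fps_const g * gfps g q * hfps q"
proof -
  have nz: "(1 - fps_const q * fps_X :: real fps) \<noteq> 0"
  proof
    assume "(1 - fps_const q * fps_X :: real fps) = 0"
    hence "(1 - fps_const q * fps_X :: real fps) $ 0 = 0" by simp
    thus False by simp
  qed
  have "(1 - fps_const q * fps_X) * (fps_X * fps_deriv (gfps g q))
      = fps_X * ((1 - fps_const q * fps_X) * fps_deriv (gfps g q))" by (simp add: ac_simps)
  also have "\<dots> = fps_X * (fps_const (g*q) * gfps g q)" by (simp add: L1)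
  also have "\<dots> = fps_const g * gfps g q * (fps_const q * fps_X)"
    unfolding fps_const_mult[symmetric] by (simp only: mult_ac)
  also have "\<dots> = fps_const g * gfps g q * ((1 - fps_const q * fps_X) * hfps q)"
    by (simp only: L2)
  also have "\<dots> = (1 - fps_const q * fps_X) * (fps_const g * gfps g q * hfps q)"
    by (simp only: mult_ac)
  finally show ?thesis using nz mult_left_cancel by blast
qed

lemma L4: fixes m :: nat shows "fps_X * fps_deriv (\<Prod>j<m. gfps (g j) (q j))
   = (\<Prod>j<m. gfps (g j) (q j)) * (\<Sum>j<m. fps_const (g j) * hfps (q j))"
proof (induction m)
  case 0 then show ?case by simp
next
  case (Suc m)
  let ?P = "\<Prod>j<m. gfps (g j) (q j)" and ?A = "\<Sum>j<m. fps_const (g j) * hfps (q j)"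
  have "fps_X * fps_deriv (?P * gfps (g m) (q m))
     = gfps (g m) (q m) * (fps_X * fps_deriv ?P) + ?P * (fps_X * fps_deriv (gfps (g m) (q m)))"
    by (simp add: distrib_left mult_ac)
  also have "\<dots> = ?P * gfps (g m) (q m) * (?A + fps_const (g m) * hfps (q m))"
    by (simp only: Suc.IH L3 distrib_left mult_ac)
  finally show ?case by simp
qed

lemma L5: fixes m :: nat shows "(\<Sum>j<m. fps_const (g j) * hfps (q j)) $ l = (if l = 0 then 0 else \<Sum>j<m. g j * q j ^ l)"
  by (simp add: fps_sum_nth hfps_def)

lemma L6:
  fixes g q :: "nat \<Rightarrow> real"
  shows "real k * (\<Prod>j<m. gfps (g j) (q j)) $ k
    = (\<Sum>l=1..k. (\<Sum>j<m. g j * q j ^ l) * (\<Prod>j<m. gfps (g j) (q j)) $ (k - l))"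
proof -
  let ?P = "\<Prod>j<m. gfps (g j) (q j)" and ?A = "\<Sum>j<m. fps_const (g j) * hfps (q j)"
  have "(fps_X * fps_deriv ?P) $ k = real k * ?P $ k"
    by (cases k) auto
  also have "fps_X * fps_deriv ?P = ?A * ?P" by (simp add: L4 mult.commute)
  finally have "real k * ?P $ k = (\<Sum>i=0..k. ?A $ i * ?P $ (k - i))"
    by (simp add: fps_mult_nth)
  also have "\<dots> = (\<Sum>i=1..k. ?A $ i * ?P $ (k - i))"
    by (cases k) (simp_all add: sum.atLeast_Suc_atMost L5)
  also have "\<dots> = (\<Sum>l=1..k. (\<Sum>j<m. g j * q j ^ l) * ?P $ (k - l))"
    by (rule sum.cong) (auto simp: L5)
  finally show ?thesis .
qed

lemma prod_nth0: fixes m :: nat shows "(\<Prod>j<m. F j :: real fps) $ 0 = (\<Prod>j<m. F j $ 0)"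
  by (induction m) auto

lemma L7:
  "(\<Prod>j<n+1. gfps (\<gamma> j) (1 - pa_alpha n c \<sigma> j / pa_alpha_plus n c \<sigma>)) $ k = pa_delta n c \<sigma> \<gamma> k"
proof (induction k rule: less_induct)
  case (less k)
  let ?q = "\<lambda>j. 1 - pa_alpha n c \<sigma> j / pa_alpha_plus n c \<sigma>"
  let ?P = "\<Prod>j<n+1. gfps (\<gamma> j) (?q j)"
  show ?case
  proof (cases "k = 0")
    case True
    then show ?thesis by (simp add: prod_nth0 gfps_def pa_delta.simps)
  next
    case False
    have "real k * ?P $ k = (\<Sum>l=1..k. (\<Sum>j<n+1. \<gamma> j * ?q j ^ l) * ?P $ (k - l))"
      by (rule L6)
    also have "\<dots> = (\<Sum>l=1..k. (\<Sum>j<n+1. \<gamma> j * ?q j ^ l) * pa_delta n c \<sigma> \<gamma> (k - l))"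
      by (rule sum.cong) (use False less.IH in auto)
    finally show ?thesis using False
      by (subst pa_delta.simps) (simp add: field_simps)
  qed
qed

lemma S1:
  assumes "0 \<le> q*z" "q*z < 1"
  shows "(\<lambda>k. gfps g q $ k * z^k) sums (1 - q*z) powr (-g)"
proof -
  have "(\<lambda>k. (-g gchoose k) * (-(q*z))^k) sums (1 + -(q*z)) powr (-g)"
    by (rule gen_binomial_real) (use assms in linarith)
  moreover have "(-g gchoose k) * (-(q*z))^k = gfps g q $ k * z^k" for k
  proof -
    have "(-(q*z))^k = (-1)^k * (q*z)^k" by (rule power_minus)
    moreover have "(-g gchoose k) = (-1)^k * pochhammer g k / fact k"
      by (subst gbinomial_pochhammer) simp
    ultimately have "(-g gchoose k) * (-(q*z))^k = ((-1)^k * (-1)^k) * (pochhammer g k / fact k * (q*z)^k)"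
      by simp
    also have "(-1::real)^k * (-1)^k = 1" by (simp flip: power_add)
    finally show ?thesis by (simp add: gfps_def power_mult_distrib)
  qed
  ultimately show ?thesis by simp
qed

lemma S2:
  fixes m :: nat
  assumes "\<forall>j<m. g j > 0 \<and> q j \<ge> 0"
  shows "(\<Prod>j<m. gfps (g j) (q j)) $ k \<ge> 0"
  using assms
proof (induction m arbitrary: k)
  case 0 then show ?case by simp
next
  case (Suc m)
  have g: "gfps (g m) (q m) $ i \<ge> 0" for i
    using Suc.prems by (auto simp: gfps_def intro!: mult_nonneg_nonneg divide_nonneg_pos less_imp_le[OF pochhammer_pos])
  show ?case using Suc g
    by (auto simp: fps_mult_nth intro!: sum_nonneg mult_nonneg_nonneg)
qed

lemma S3:
  fixes m :: nat
  assumes "\<forall>j<m. g j > 0 \<and> q j \<ge> 0 \<and> q j < 1" "0 \<le> z" "z \<le> 1"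
  shows "(\<lambda>k. (\<Prod>j<m. gfps (g j) (q j)) $ k * z^k) sums (\<Prod>j<m. (1 - q j * z) powr (-g j))"
  using assms(1)
proof (induction m)
  case 0
  have "(\<lambda>k. if k = 0 then (1::real) else 0) sums 1"
    using sums_single[of 0 "\<lambda>_. 1::real"] by simp
  moreover have "(\<lambda>k. (1::real fps) $ k * z^k) = (\<lambda>k. if k = 0 then 1 else 0)"
    by (auto simp: fun_eq_iff)
  ultimately show ?case by simp
next
  case (Suc m)
  let ?P = "\<Prod>j<m. gfps (g j) (q j)" and ?G = "gfps (g m) (q m)"
  define a where "a k = ?P $ k * z^k" for k
  define b where "b k = ?G $ k * z^k" for k
  have qz: "0 \<le> q m * z" "q m * z < 1"
  proof -
    have q: "0 \<le> q m" "q m < 1" using Suc.prems by auto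
    have "q m * z \<le> q m * 1" by (rule mult_left_mono) (use q assms(3) in auto)
    then show "0 \<le> q m * z" "q m * z < 1" using q assms(2) by (auto intro: mult_nonneg_nonneg)
  qed
  have sa: "a sums (\<Prod>j<m. (1 - q j * z) powr (-g j))"
    unfolding a_def using Suc by auto
  have sb: "b sums ((1 - q m * z) powr (-g m))"
    unfolding b_def by (rule S1[OF qz])
  have a0: "a k \<ge> 0" for k unfolding a_def
    using S2[of m g q k] Suc.prems assms(2) by auto
  have b0: "b k \<ge> 0" for k unfolding b_def
    using S2[of 1 "\<lambda>_. g m" "\<lambda>_. q m" k] Suc.prems assms(2) by auto
  have "(\<lambda>k. \<Sum>i\<le>k. a i * b (k - i)) sums (suminf a * suminf b)"
  proof (rule Cauchy_product_sums)
    show "summable (\<lambda>k. norm (a k))" using a0 sums_summable[OF sa] by simp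
    show "summable (\<lambda>k. norm (b k))" using b0 sums_summable[OF sb] by simp
  qed
  moreover have "suminf a * suminf b = (\<Prod>j<Suc m. (1 - q j * z) powr (-g j))"
    using sa sb by (simp add: sums_iff)
  moreover have "(\<Sum>i\<le>k. a i * b (k - i)) = (\<Prod>j<Suc m. gfps (g j) (q j)) $ k * z^k" for k
  proof -
    have "(\<Sum>i\<le>k. a i * b (k - i)) = (\<Sum>i=0..k. ?P $ i * ?G $ (k - i) * z^k)"
      unfolding a_def b_def atLeast0AtMost[symmetric]
      by (rule sum.cong) (auto simp: power_add[symmetric])
    also have "\<dots> = (?P * ?G) $ k * z^k"
      by (simp add: fps_mult_nth sum_distrib_right)
    finally show ?thesis by simp
  qed
  ultimately show ?case by simp
qed

theorem theorem2p4:
  fixes M :: "'a measure" and n :: nat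
    and c :: "nat \<Rightarrow> nat \<Rightarrow> real" and \<sigma> \<gamma> :: "nat \<Rightarrow> real"
    and X :: "nat \<Rightarrow> 'a \<Rightarrow> real"
  assumes "prob_space M"
    and c01: "\<forall>i<n. \<forall>j<n+1. c i j \<in> {0, 1}"
    and rows: "\<forall>i<n. \<exists>j<n+1. c i j = 1"
    and cols: "\<forall>j<n+1. \<exists>i<n. c i j = 1"
    and \<sigma>_pos: "\<forall>i<n. \<sigma> i > 0"
    and \<gamma>_pos: "\<forall>j<n+1. \<gamma> j > 0"
    and \<gamma>_sum: "(\<Sum>j<n+1. \<gamma> j) > 1"
    and X_rv: "\<forall>i<n. X i \<in> borel_measurable M"
    and survival: "\<forall>x :: nat \<Rightarrow> real. (\<forall>i<n. x i > 0) \<longrightarrow>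
        measure M {\<omega> \<in> space M. \<forall>i<n. X i \<omega> > x i}
          = (\<Prod>j<n+1. (1 + (\<Sum>i<n. c i j / \<sigma> i * x i)) powr (- \<gamma> j))"
  shows "\<forall>x > 0. (\<lambda>k. pa_p n c \<sigma> \<gamma> k *
             (1 + x / pa_alpha_plus n c \<sigma>) powr (- ((\<Sum>j<n+1. \<gamma> j) + real k)))
           sums measure M {\<omega> \<in> space M. Min ((\<lambda>i. X i \<omega>) ` {..<n}) > x}"
proof (intro allI impI)
  fix x :: real assume x0: "x > 0"
  have n1: "n \<noteq> 0" using cols by auto
  define S where "S j = (\<Sum>i<n. c i j / \<sigma> i)" for j
  define \<alpha> where "\<alpha> j = pa_alpha n c \<sigma> j" for j
  define ap where "ap = pa_alpha_plus n c \<sigma>"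
  define q where "q j = 1 - \<alpha> j / ap" for j
  define G where "G = (\<Sum>j<n+1. \<gamma> j)"
  have \<alpha>S: "\<alpha> j = inverse (S j)" for j by (simp add: \<alpha>_def S_def pa_alpha_def)
  have Spos: "S j > 0" if j: "j < n+1" for j
  proof -
    obtain i where i: "i < n" "c i j = 1" using cols j by auto
    show ?thesis unfolding S_def
    proof (rule sum_pos2[of _ i])
      show "0 < c i j / \<sigma> i" using i \<sigma>_pos by auto
      show "\<And>i'. i' \<in> {..<n} \<Longrightarrow> 0 \<le> c i' j / \<sigma> i'"
        using c01 \<sigma>_pos j by (force intro: divide_nonneg_pos)
    qed (use i in auto)
  qed
  have \<alpha>pos: "\<alpha> j > 0" if "j < n+1" for j using Spos[OF that] \<alpha>S by simp
  have \<alpha>le: "\<alpha> j \<le> ap" if "j < n+1" for j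
    unfolding ap_def pa_alpha_plus_def \<alpha>_def using that by (intro Max_ge) auto
  have ap0: "ap > 0" using \<alpha>pos[of 0] \<alpha>le[of 0] by simp
  have q01: "0 \<le> q j \<and> q j < 1" if "j < n+1" for j
    using \<alpha>pos[OF that] \<alpha>le[OF that] ap0 by (auto simp: q_def field_simps)
  define t where "t = 1 + x / ap"
  have t1: "t > 1" using x0 ap0 by (simp add: t_def)
  define z where "z = 1 / t"
  have z01: "0 \<le> z" "z \<le> 1" using t1 by (auto simp: z_def)
  define C where "C = pa_c_plus n c \<sigma> \<gamma> * t powr (- G)"
  have ser: "(\<lambda>k. pa_delta n c \<sigma> \<gamma> k * z^k) sums (\<Prod>j<n+1. (1 - q j * z) powr (-\<gamma> j))"
    using S3[of "n+1" \<gamma> q z] q01 \<gamma>_pos z01 L7[of \<gamma> n c \<sigma>]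
    by (simp add: q_def \<alpha>_def ap_def)
  have ser2: "(\<lambda>k. C * (pa_delta n c \<sigma> \<gamma> k * z^k)) sums (C * (\<Prod>j<n+1. (1 - q j * z) powr (-\<gamma> j)))"
    by (rule sums_mult[OF ser])
  have tm: "pa_p n c \<sigma> \<gamma> k * (1 + x / pa_alpha_plus n c \<sigma>) powr (- ((\<Sum>j<n+1. \<gamma> j) + real k))
      = C * (pa_delta n c \<sigma> \<gamma> k * z^k)" for k
  proof -
    have "t powr (- (G + real k)) = t powr (-G) * t powr (- real k)"
      by (simp add: powr_add[symmetric])
    also have "t powr (- real k) = z^k"
      using t1 by (simp add: powr_minus powr_realpow z_def power_one_over inverse_eq_divide)
    finally have calc: "t powr (- (G + real k)) = t powr (-G) * z^k" .
    have e1: "1 + x / pa_alpha_plus n c \<sigma> = t" by (simp add: t_def ap_def)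
    show ?thesis unfolding e1 G_def[symmetric] pa_p_def C_def calc by (simp only: mult_ac)
  qed
  have meas: "measure M {\<omega> \<in> space M. Min ((\<lambda>i. X i \<omega>) ` {..<n}) > x}
      = (\<Prod>j<n+1. (1 + S j * x) powr (- \<gamma> j))"
  proof -
    have "{\<omega> \<in> space M. Min ((\<lambda>i. X i \<omega>) ` {..<n}) > x} = {\<omega> \<in> space M. \<forall>i<n. X i \<omega> > (\<lambda>_. x) i}"
    proof -
      have "(x < Min ((\<lambda>i. X i \<omega>) ` {..<n})) = (\<forall>i<n. x < X i \<omega>)" for \<omega>
        by (subst Min_gr_iff) (use n1 in auto)
      thus ?thesis by auto
    qed
    also have "measure M \<dots> = (\<Prod>j<n+1. (1 + (\<Sum>i<n. c i j / \<sigma> i * (\<lambda>_. x) i)) powr (- \<gamma> j))"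
      using survival[rule_format, of "\<lambda>_. x"] x0 by simp
    finally show ?thesis by (simp add: S_def sum_distrib_right)
  qed
  have val: "C * (\<Prod>j<n+1. (1 - q j * z) powr (-\<gamma> j)) = (\<Prod>j<n+1. (1 + S j * x) powr (- \<gamma> j))"
  proof -
    have tG: "t powr (- G) = (\<Prod>j<n+1. t powr (- \<gamma> j))"
      unfolding G_def sum_negf[symmetric] using t1 by (intro powr_sum) simp
    have "C * (\<Prod>j<n+1. (1 - q j * z) powr (-\<gamma> j))
       = (\<Prod>j<n+1. (\<alpha> j / ap) powr \<gamma> j * t powr (- \<gamma> j) * (1 - q j * z) powr (-\<gamma> j))"
      unfolding C_def tG pa_c_plus_def \<alpha>_def ap_def by (simp only: prod.distrib)
    also have "\<dots> = (\<Prod>j<n+1. (1 + S j * x) powr (- \<gamma> j))"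
    proof (rule prod.cong[OF refl])
      fix j assume "j \<in> {..<n+1}"
      hence j: "j < n+1" by simp
      have a: "\<alpha> j > 0" using \<alpha>pos[OF j] .
      have qz: "1 - q j * z > 0" using q01[OF j] z01
      proof -
        have "q j * z \<le> q j * 1" by (rule mult_left_mono) (use q01[OF j] z01 in auto)
        thus ?thesis using q01[OF j] by simp
      qed
      have e: "t * (1 - q j * z) = (\<alpha> j / ap) * (1 + S j * x)"
      proof -
        have aS: "\<alpha> j * S j = 1" using \<alpha>S[of j] Spos[OF j] by simp
        have "t * (1 - q j * z) = t - q j" using t1 by (simp add: z_def field_simps)
        also have "\<dots> = (x + \<alpha> j) / ap" using ap0 by (simp add: t_def q_def field_simps)
        also have "\<dots> = (\<alpha> j / ap) * (1 + S j * x)"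
          using ap0 aS by (simp add: field_simps)
        finally show ?thesis .
      qed
      have "(\<alpha> j / ap) powr \<gamma> j * t powr (- \<gamma> j) * (1 - q j * z) powr (-\<gamma> j)
          = (\<alpha> j / ap) powr \<gamma> j * (t * (1 - q j * z)) powr (-\<gamma> j)"
        using t1 qz by (simp add: powr_mult)
      also have "\<dots> = ((\<alpha> j / ap) powr \<gamma> j * (\<alpha> j / ap) powr (-\<gamma> j)) * (1 + S j * x) powr (-\<gamma> j)"
      proof -
        have pm: "((\<alpha> j / ap) * (1 + S j * x)) powr (-\<gamma> j) = (\<alpha> j/ap) powr (-\<gamma> j) * (1 + S j*x) powr (-\<gamma> j)"
          by (rule powr_mult)
        show ?thesis unfolding e pm by (simp only: mult_ac)
      qed
      also have "(\<alpha> j / ap) powr \<gamma> j * (\<alpha> j / ap) powr (-\<gamma> j) = 1"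
        using a ap0 by (simp add: powr_add[symmetric])
      finally show "(\<alpha> j / ap) powr \<gamma> j * t powr (- \<gamma> j) * (1 - q j * z) powr (-\<gamma> j)
          = (1 + S j * x) powr (- \<gamma> j)" by simp
    qed
    finally show ?thesis .
  qed
  show "(\<lambda>k. pa_p n c \<sigma> \<gamma> k * (1 + x / pa_alpha_plus n c \<sigma>) powr (- ((\<Sum>j<n+1. \<gamma> j) + real k)))
           sums measure M {\<omega> \<in> space M. Min ((\<lambda>i. X i \<omega>) ` {..<n}) > x}"
    unfolding tm meas val[symmetric] by (rule ser2)
qed

end
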